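(* Let $T$ be a string of length $n$ over an alphabet $\Sigma$ of size $\sigma\ge 2$. For any $1\le i\le j<n$, $|\mathsf{MUS}(T[i..j+1])\bigtriangleup\mathsf{MUS}(T[i..j])|\le 4$ and $-1\le|\mathsf{MUS}(T[i..j+1])|-|\mathsf{MUS}(T[i..j])|\le 2$. Furthermore, these bounds are tight: for any $\sigma\ge 3$ and any $i,j$ with $1\le i\le j<n$ and $j-i+1\ge 5$, there exist strings $T$ over an alphabet of size $\sigma$ attaining $|\mathsf{MUS}(T[i..j+1])\bigtriangleup\mathsf{MUS}(T[i..j])|=4$, strings attaining $|\mathsf{MUS}(T[i..j+1])|-|\mathsf{MUS}(T[i..j])|=2$, and strings attaining $|\mathsf{MUS}(T[i..j+1])|-|\mathsf{MUS}(T[i..j])|=-1$.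
   Context: $T[a..b]$ denotes the substring of $T$ from position $a$ to $b$. For a string $S$ and a string $w$, $\#\mathit{occ}_S(w)$ is the number of positions at which $w$ occurs in $S$; by convention $\#\mathit{occ}_S(\varepsilon)=|S|+1$. A substring $w$ of $S$ is unique in $S$ if $\#\mathit{occ}_S(w)=1$ and repeating in $S$ if $\#\mathit{occ}_S(w)\ge 2$. For $1\le i\le j\le n$, $\mathsf{MUS}(T[i..j])$ is the set of intervals $[s,t]$ (positions in $T$) with $i\le s\le t\le j$ such that $T[s..t]$ is unique in $T[i..j]$ and every proper substring of $T[s..t]$ (including the empty string) is repeating in $T[i..j]$. $\bigtriangleup$ denotes symmetric difference. *)

theory Defs
  imports Main "HOL-Library.Sublist"
begin

text \<open>Strings are lists; positions are 1-based as in the paper.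
  substr T a b is T[a..b] (for 1 <= a <= b <= |T|).\<close>
definition substr :: "'a list \<Rightarrow> nat \<Rightarrow> nat \<Rightarrow> 'a list" where
  "substr T a b = take (Suc b - a) (drop (a - 1) T)"

text \<open>Number of occurrences of w in S; by convention |S|+1 for the empty string.\<close>
definition occ :: "'a list \<Rightarrow> 'a list \<Rightarrow> nat" where
  "occ S w = (if w = [] then length S + 1
              else card {p. p + length w \<le> length S \<and> take (length w) (drop p S) = w})"

definition MUS :: "'a list \<Rightarrow> nat \<Rightarrow> nat \<Rightarrow> (nat \<times> nat) set" where
  "MUS T i j = {(s, t). i \<le> s \<and> s \<le> t \<and> t \<le> j
       \<and> occ (substr T i j) (substr T s t) = 1
       \<and> (\<forall>w. sublist w (substr T s t) \<and> w \<noteq> substr T s t \<longrightarrow> occ (substr T i j) w \<ge> 2)}"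

definition symdiff :: "'b set \<Rightarrow> 'b set \<Rightarrow> 'b set" where
  "symdiff A B = (A - B) \<union> (B - A)"

end

theory Submission
  imports Defs
begin


definition occs :: "'a list \<Rightarrow> 'a list \<Rightarrow> nat set" where
  "occs S w = {p. p + length w \<le> length S \<and> take (length w) (drop p S) = w}"

lemma occs_sub: "occs S w \<subseteq> {..length S}"
  unfolding occs_def by auto

lemma finite_occs[simp]: "finite (occs S w)"
  using occs_sub finite_subset by blast

lemma occ_card: "occ S w = card (occs S w)"
proof (cases "w = []")
  case True
  then have "occs S w = {..length S}" unfolding occs_def by auto
  then show ?thesis using True unfolding occ_def by simp
qed (simp add: occ_def occs_def)

lemma occs_snoc:
  "occs (S @ [c]) w = occs S w \<union> (if suffix w (S @ [c]) then {Suc (length S) - length w} else {})"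
proof (intro set_eqI iffI)
  fix p assume p: "p \<in> occs (S @ [c]) w"
  show "p \<in> occs S w \<union> (if suffix w (S @ [c]) then {Suc (length S) - length w} else {})"
  proof (cases "p + length w \<le> length S")
    case True
    then have "take (length w) (drop p (S @ [c])) = take (length w) (drop p S)" by simp
    then show ?thesis using p True unfolding occs_def by auto
  next
    case False
    then have pe: "p + length w = Suc (length S)" using p unfolding occs_def by auto
    then have "drop p (S @ [c]) = w" using p unfolding occs_def by auto
    then have "suffix w (S @ [c])" by (metis suffix_drop)
    then show ?thesis using pe by auto
  qed
next
  fix p assume p: "p \<in> occs S w \<union> (if suffix w (S @ [c]) then {Suc (length S) - length w} else {})"
  show "p \<in> occs (S @ [c]) w"
  proof (cases "p \<in> occs S w")
    case True then show ?thesis unfolding occs_def by auto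
  next
    case False
    then have s: "suffix w (S @ [c])" and pe: "p = Suc (length S) - length w" using p by (auto split: if_splits)
    from s obtain zs where zs: "S @ [c] = zs @ w" unfolding suffix_def by auto
    then have "length zs = p" using pe by (metis add_diff_cancel_right' length_append length_append_singleton)
    then have "drop p (S @ [c]) = w" using zs by auto
    moreover have "p + length w = length (S @ [c])" using zs \<open>length zs = p\<close> by simp
    ultimately show ?thesis unfolding occs_def by simp
  qed
qed

lemma occ_snoc: "occ (S @ [c]) w = occ S w + (if suffix w (S @ [c]) then 1 else 0)"
proof -
  have d: "Suc (length S) - length w \<notin> occs S w"
    unfolding occs_def by auto
  show ?thesis unfolding occ_card occs_snoc using d by auto
qed

lemma occs_shift: "k \<in> occs S (p @ x @ q) \<Longrightarrow> k + length p \<in> occs S x"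
proof -
  assume k: "k \<in> occs S (p @ x @ q)"
  then have "take (length p + length x + length q) (drop k S) = p @ x @ q" unfolding occs_def by (simp add: add.assoc)
  then have "drop (length p) (take (length p + length x + length q) (drop k S)) = x @ q" by simp
  then have "take (length x + length q) (drop (k + length p) S) = x @ q"
    by (simp add: drop_take add.commute)
  then have "take (length x) (drop (k + length p) S) = x"
    by (metis append_eq_conv_conj length_append take_take min_absorb1 le_add1 append_take_drop_id take_append)
  then show ?thesis using k unfolding occs_def by auto
qed

lemma occ_mono: "sublist x y \<Longrightarrow> occ S y \<le> occ S x"
proof -
  assume "sublist x y"
  then obtain p q where y: "y = p @ x @ q" unfolding sublist_def by auto
  show ?thesis
  proof (cases "x = []")
    case True
    then have "occs S x = {..length S}" unfolding occs_def by auto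
    then have "card (occs S y) \<le> card (occs S x)" using occs_sub[of S y] by (metis card_mono finite_atMost)
    then show ?thesis unfolding occ_card .
  next
    case False
    have "inj_on (\<lambda>k. k + length p) (occs S y)" by (auto simp: inj_on_def)
    moreover have "(\<lambda>k. k + length p) ` occs S y \<subseteq> occs S x" using occs_shift y by blast
    ultimately show ?thesis unfolding occ_card by (meson card_inj_on_le finite_occs)
  qed
qed

lemma occ_one_unique: "occ S w = 1 \<Longrightarrow> p \<in> occs S w \<Longrightarrow> q \<in> occs S w \<Longrightarrow> p = q"
proof -
  assume a: "occ S w = 1" "p \<in> occs S w" "q \<in> occs S w"
  then obtain x where "occs S w = {x}" unfolding occ_card using card_1_singletonE by blast
  then show ?thesis using a by auto
qed

lemma occ_ge2: "p \<in> occs S w \<Longrightarrow> q \<in> occs S w \<Longrightarrow> p \<noteq> q \<Longrightarrow> 2 \<le> occ S w"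
proof -
  assume "p \<in> occs S w" "q \<in> occs S w" "p \<noteq> q"
  then have "{p, q} \<subseteq> occs S w" by auto
  then have "card {p,q} \<le> card (occs S w)" by (intro card_mono) auto
  then show ?thesis unfolding occ_card using \<open>p \<noteq> q\<close> by simp
qed

lemma occ_ge1: "p \<in> occs S w \<Longrightarrow> 1 \<le> occ S w"
proof -
  assume "p \<in> occs S w"
  then have "occs S w \<noteq> {}" by auto
  then have "card (occs S w) > 0" by (simp add: card_gt_0_iff)
  then show ?thesis unfolding occ_card by simp
qed

lemma occ_le1: "occs S w \<subseteq> {p} \<Longrightarrow> occ S w \<le> 1"
proof -
  assume "occs S w \<subseteq> {p}"
  then have "card (occs S w) \<le> card {p}" by (intro card_mono) auto
  then show ?thesis unfolding occ_card by simp
qed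

lemma occ_Nil: "occ S [] = Suc (length S)"
  by (simp add: occ_def)

lemma occs_nth: "p \<in> occs S w \<longleftrightarrow> p + length w \<le> length S \<and> (\<forall>q<length w. S ! (p + q) = w ! q)"
  unfolding occs_def mem_Collect_eq
proof
  assume a: "p + length w \<le> length S \<and> take (length w) (drop p S) = w"
  have "\<forall>q<length w. S ! (p + q) = w ! q"
  proof (intro allI impI)
    fix q assume "q < length w"
    then have "S ! (p + q) = take (length w) (drop p S) ! q" using a[THEN conjunct1] by simp
    moreover have "take (length w) (drop p S) = w" using a by blast
    ultimately show "S ! (p + q) = w ! q" by simp
  qed
  then show "p + length w \<le> length S \<and> (\<forall>q<length w. S ! (p + q) = w ! q)" using a by simp
next
  assume a: "p + length w \<le> length S \<and> (\<forall>q<length w. S ! (p + q) = w ! q)"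
  have "take (length w) (drop p S) = w" using a by (intro nth_equalityI) auto
  then show "p + length w \<le> length S \<and> take (length w) (drop p S) = w" using a by simp
qed

lemma occs_move: "p \<in> occs S w \<Longrightarrow> q + length w \<le> length S \<Longrightarrow> (\<forall>r<length w. S ! (q + r) = S ! (p + r))
   \<Longrightarrow> q \<in> occs S w"
  unfolding occs_nth by auto




lemma substr_len: "1 \<le> s \<Longrightarrow> t \<le> length T \<Longrightarrow> length (substr T s t) = Suc t - s"
  unfolding substr_def by auto

lemma substr_1: "substr T 1 j = take j T"
  unfolding substr_def by simp

lemma sub_occ: "1 \<le> s \<Longrightarrow> s \<le> t \<Longrightarrow> t \<le> j \<Longrightarrow> j \<le> length T \<Longrightarrow>
   s - 1 \<in> occs (take j T) (substr T s t)"
  unfolding occs_def substr_def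
  by (auto simp: take_drop min_def)

lemma occ_sub: "p \<in> occs (take j T) w \<Longrightarrow> j \<le> length T \<Longrightarrow>
   substr T (Suc p) (p + length w) = w \<and> p + length w \<le> j"
proof -
  assume p: "p \<in> occs (take j T) w" and j: "j \<le> length T"
  then have le: "p + length w \<le> j" unfolding occs_def by auto
  have "take (length w) (drop p (take j T)) = w" using p unfolding occs_def by auto
  moreover have "take (length w) (drop p (take j T)) = take (length w) (drop p T)"
    using le by (simp add: take_drop min_def)
  ultimately show ?thesis using le unfolding substr_def by auto
qed

lemma substr_decomp: "1 \<le> s \<Longrightarrow> s \<le> a \<Longrightarrow> a \<le> b \<Longrightarrow> b \<le> t \<Longrightarrow> t \<le> length T \<Longrightarrow>
  \<exists>x y. substr T s t = x @ substr T a b @ y \<and> length x = a - s"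
proof -
  assume h: "1 \<le> s" "s \<le> a" "a \<le> b" "b \<le> t" "t \<le> length T"
  define u where "u = substr T s t"
  have lu: "length u = Suc t - s" using h substr_len u_def by auto
  have "drop (a - s) u = take (Suc t - a) (drop (a - 1) T)"
    using h unfolding u_def substr_def by (simp add: drop_take)
  then have "take (Suc b - a) (drop (a - s) u) = substr T a b"
    using h unfolding substr_def by (simp add: min_def)
  then have "u = take (a - s) u @ substr T a b @ drop (Suc b - a) (drop (a - s) u)"
    by (metis append_take_drop_id)
  moreover have "length (take (a - s) u) = a - s" using lu h by simp
  ultimately show ?thesis unfolding u_def by blast
qed

lemma sublist_of_substr: "1 \<le> s \<Longrightarrow> s \<le> a \<Longrightarrow> a \<le> b \<Longrightarrow> b \<le> t \<Longrightarrow> t \<le> length T \<Longrightarrow>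
  sublist (substr T a b) (substr T s t)"
  using substr_decomp unfolding sublist_def by metis

lemma sublist_substr: "1 \<le> s \<Longrightarrow> s \<le> t \<Longrightarrow> t \<le> length T \<Longrightarrow> sublist x (substr T s t) \<Longrightarrow> x \<noteq> [] \<Longrightarrow>
  \<exists>a b. s \<le> a \<and> a \<le> b \<and> b \<le> t \<and> x = substr T a b"
proof -
  assume h: "1 \<le> s" "s \<le> t" "t \<le> length T" "sublist x (substr T s t)" "x \<noteq> []"
  then obtain p q where pq: "substr T s t = p @ x @ q" unfolding sublist_def by auto
  have "s - 1 \<in> occs (take t T) (substr T s t)" using h sub_occ by auto
  then have "s - 1 + length p \<in> occs (take t T) x" using pq occs_shift by metis
  from occ_sub[OF this h(3)] have "substr T (Suc (s - 1 + length p)) (s - 1 + length p + length x) = x"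
     "s - 1 + length p + length x \<le> t" by auto
  moreover have lx: "length x \<ge> 1" using h by (cases x) auto
  ultimately have "s \<le> Suc (s - 1 + length p) \<and> Suc (s - 1 + length p) \<le> s - 1 + length p + length x
     \<and> s - 1 + length p + length x \<le> t \<and> x = substr T (Suc (s - 1 + length p)) (s - 1 + length p + length x)"
    using h apply (intro conjI)
    apply linarith
    apply linarith
    apply linarith
    by simp
  then show ?thesis by blast
qed

lemma MUS1: "MUS T 1 j = {(s, t). 1 \<le> s \<and> s \<le> t \<and> t \<le> j
       \<and> occ (take j T) (substr T s t) = 1
       \<and> (\<forall>w. sublist w (substr T s t) \<and> w \<noteq> substr T s t \<longrightarrow> occ (take j T) w \<ge> 2)}"
  unfolding MUS_def substr_1 by simp

lemma nonnest: "j \<le> length T \<Longrightarrow> (s, t) \<in> MUS T 1 j \<Longrightarrow> (s', t') \<in> MUS T 1 j \<Longrightarrow> s \<le> s' \<Longrightarrow> t' \<le> t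
  \<Longrightarrow> s = s' \<and> t = t'"
proof (rule ccontr)
  assume h: "j \<le> length T" "(s, t) \<in> MUS T 1 j" "(s', t') \<in> MUS T 1 j" "s \<le> s'" "t' \<le> t"
    and ne: "\<not> (s = s' \<and> t = t')"
  from h have a: "1 \<le> s" "s' \<le> t'" "t \<le> j" "1 \<le> s'" unfolding MUS1 by auto
  have sl: "sublist (substr T s' t') (substr T s t)" using h a by (intro sublist_of_substr) auto
  have "length (substr T s' t') \<noteq> length (substr T s t)" using h a ne by (simp add: substr_len; arith)
  then have "substr T s' t' \<noteq> substr T s t" by metis
  then have "occ (take j T) (substr T s' t') \<ge> 2" using h(2) sl unfolding MUS1 by auto
  moreover have "occ (take j T) (substr T s' t') = 1" using h(3) unfolding MUS1 by auto
  ultimately show False by simp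
qed

lemma finite_MUS: "finite (MUS T i j)"
  by (rule finite_subset[of _ "{..j} \<times> {..j}"]) (auto simp: MUS_def)

lemma same_end: "j \<le> length T \<Longrightarrow> card {x \<in> MUS T 1 j. snd x = e} \<le> 1"
proof -
  assume j: "j \<le> length T"
  have fin: "finite (MUS T 1 j)" by (rule finite_MUS)
  have "\<forall>x\<in>{x \<in> MUS T 1 j. snd x = e}. \<forall>y\<in>{x \<in> MUS T 1 j. snd x = e}. x = y"
  proof (intro ballI)
    fix x y assume x: "x \<in> {x \<in> MUS T 1 j. snd x = e}" and y: "y \<in> {x \<in> MUS T 1 j. snd x = e}"
    obtain s t where st: "x = (s, t)" by force
    obtain s' t' where st': "y = (s', t')" by force
    show "x = y"
    proof (cases "s \<le> s'")
      case True then show ?thesis using nonnest[OF j, of s t s' t'] x y st st' by auto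
    next
      case False then show ?thesis using nonnest[OF j, of s' t' s t] x y st st' by auto
    qed
  qed
  then show ?thesis using fin by (simp add: card_le_Suc0_iff_eq)
qed





lemma suffix_trans': "suffix x y \<Longrightarrow> suffix y z \<Longrightarrow> suffix x z"
  unfolding suffix_def by (metis append_assoc)

lemma proper_sublist: "sublist x y \<Longrightarrow> x \<noteq> y \<Longrightarrow> sublist x (tl y) \<or> sublist x (butlast y)"
proof -
  assume "sublist x y" "x \<noteq> y"
  then obtain p q where y: "y = p @ x @ q" unfolding sublist_def by auto
  show ?thesis
  proof (cases p)
    case (Cons a p')
    then have "tl y = p' @ x @ q" using y by simp
    then show ?thesis unfolding sublist_def by blast
  next
    case Nil
    then have "q \<noteq> []" using y \<open>x \<noteq> y\<close> by auto
    then have "butlast y = [] @ x @ butlast q" using y Nil by (simp add: butlast_append)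
    then show ?thesis unfolding sublist_def by blast
  qed
qed

definition Pw :: "'a list \<Rightarrow> nat \<Rightarrow> 'a list \<Rightarrow> nat \<Rightarrow> nat \<Rightarrow> bool" where
  "Pw T j w a b \<longleftrightarrow> 1 \<le> a \<and> a \<le> b \<and> b \<le> j \<and> substr T a b = w \<and> suffix w (take (Suc j) T)
     \<and> occ (take j T) w = 1"

context
  fixes T :: "'a list" and j :: nat
  assumes j1: "1 \<le> j" and jl: "j < length T"
begin

lemma occS': "occ (take (Suc j) T) w = occ (take j T) w + (if suffix w (take (Suc j) T) then 1 else 0)"
  using occ_snoc[of "take j T" "T ! j" w] jl by (simp add: take_Suc_conv_app_nth)

lemma occS_Nil: "occ (take j T) [] \<ge> 2"
  using j1 jl by (simp add: occ_Nil)

lemma R_char: "(s, t) \<in> MUS T 1 j - MUS T 1 (Suc j) \<Longrightarrow>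
   suffix (substr T s t) (take (Suc j) T) \<and> occ (take j T) (substr T s t) = 1 \<and> 1 \<le> s \<and> s \<le> t \<and> t \<le> j"
proof -
  assume h: "(s, t) \<in> MUS T 1 j - MUS T 1 (Suc j)"
  then have m: "1 \<le> s" "s \<le> t" "t \<le> j" "occ (take j T) (substr T s t) = 1"
     "\<forall>w. sublist w (substr T s t) \<and> w \<noteq> substr T s t \<longrightarrow> occ (take j T) w \<ge> 2"
    unfolding MUS1 by auto
  have "\<forall>w. sublist w (substr T s t) \<and> w \<noteq> substr T s t \<longrightarrow> occ (take (Suc j) T) w \<ge> 2"
    using m(5) occS' by (metis le_add1 order_trans)
  then have "occ (take (Suc j) T) (substr T s t) \<noteq> 1" using h m unfolding MUS1 by auto
  then have "suffix (substr T s t) (take (Suc j) T)" using occS' m(4) by (metis add.right_neutral)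
  then show ?thesis using m by auto
qed

lemma card_R: "card (MUS T 1 j - MUS T 1 (Suc j)) \<le> 1"
proof -
  have key: "x = y" if x: "x \<in> MUS T 1 j - MUS T 1 (Suc j)" and y: "y \<in> MUS T 1 j - MUS T 1 (Suc j)"
    and sxy: "suffix (substr T (fst x) (snd x)) (substr T (fst y) (snd y))" for x y
  proof -
    obtain s1 t1 where x1: "x = (s1, t1)" by force
    obtain s2 t2 where y1: "y = (s2, t2)" by force
    have r1: "suffix (substr T s1 t1) (take (Suc j) T)" "occ (take j T) (substr T s1 t1) = 1" "1 \<le> s1" "s1 \<le> t1" "t1 \<le> j"
      using R_char x x1 by auto
    have r2: "suffix (substr T s2 t2) (take (Suc j) T)" "occ (take j T) (substr T s2 t2) = 1" "1 \<le> s2" "s2 \<le> t2" "t2 \<le> j"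
      using R_char y y1 by auto
    have m2: "\<forall>w. sublist w (substr T s2 t2) \<and> w \<noteq> substr T s2 t2 \<longrightarrow> occ (take j T) w \<ge> 2"
      using y y1 unfolding MUS1 by auto
    have eq: "substr T s1 t1 = substr T s2 t2"
    proof (rule ccontr)
      assume "substr T s1 t1 \<noteq> substr T s2 t2"
      moreover have "sublist (substr T s1 t1) (substr T s2 t2)" using sxy x1 y1 by auto
      ultimately have "occ (take j T) (substr T s1 t1) \<ge> 2" using m2 by auto
      then show False using r1 by simp
    qed
    have "s1 - 1 \<in> occs (take j T) (substr T s1 t1)" using r1 jl by (intro sub_occ) auto
    moreover have "s2 - 1 \<in> occs (take j T) (substr T s1 t1)" unfolding eq using r2 jl by (intro sub_occ) auto
    ultimately have "s1 - 1 = s2 - 1" using occ_one_unique r1(2) by metis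
    then have "s1 = s2" using r1 r2 by simp
    moreover have "length (substr T s1 t1) = length (substr T s2 t2)" using eq by simp
    ultimately have "t1 = t2" using r1 r2 jl by (simp add: substr_len)
    then show ?thesis using x1 y1 \<open>s1 = s2\<close> by simp
  qed
  have "\<forall>x\<in>MUS T 1 j - MUS T 1 (Suc j). \<forall>y\<in>MUS T 1 j - MUS T 1 (Suc j). x = y"
  proof (intro ballI)
    fix x y assume x: "x \<in> MUS T 1 j - MUS T 1 (Suc j)" and y: "y \<in> MUS T 1 j - MUS T 1 (Suc j)"
    have "suffix (substr T (fst x) (snd x)) (take (Suc j) T)" "suffix (substr T (fst y) (snd y)) (take (Suc j) T)"
      using R_char[of "fst x" "snd x"] R_char[of "fst y" "snd y"] x y by auto
    then consider "suffix (substr T (fst x) (snd x)) (substr T (fst y) (snd y))"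
      | "suffix (substr T (fst y) (snd y)) (substr T (fst x) (snd x))"
      using suffix_same_cases by blast
    then show "x = y" using key x y by metis
  qed
  then show ?thesis using finite_MUS by (metis card_le_Suc0_iff_eq finite_Diff One_nat_def)
qed

lemma end_aux: "Pw T j w1 a1 b1 \<Longrightarrow> Pw T j w2 a2 b2 \<Longrightarrow> suffix w1 w2 \<Longrightarrow> b1 = b2"
proof -
  assume p1: "Pw T j w1 a1 b1" and p2: "Pw T j w2 a2 b2" and s: "suffix w1 w2"
  from s obtain x where x: "w2 = x @ w1 @ []" unfolding suffix_def by auto
  have "a2 - 1 \<in> occs (take j T) w2" using p2 jl unfolding Pw_def by (metis sub_occ less_imp_le)
  then have "a2 - 1 + length x \<in> occs (take j T) w1" using x occs_shift by metis
  moreover have "a1 - 1 \<in> occs (take j T) w1" using p1 jl unfolding Pw_def by (metis sub_occ less_imp_le)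
  ultimately have e: "a1 - 1 = a2 - 1 + length x" using p1 unfolding Pw_def by (metis occ_one_unique)
  have l1: "length w1 = Suc b1 - a1" using p1 jl unfolding Pw_def by (metis substr_len less_imp_le order_trans)
  have l2: "length w2 = Suc b2 - a2" using p2 jl unfolding Pw_def by (metis substr_len less_imp_le order_trans)
  have "length w2 = length x + length w1" using x by simp
  then show ?thesis using l1 l2 e p1 p2 unfolding Pw_def by linarith
qed

lemma end_lemma: "Pw T j w1 a1 b1 \<Longrightarrow> Pw T j w2 a2 b2 \<Longrightarrow> b1 = b2"
proof -
  assume p1: "Pw T j w1 a1 b1" and p2: "Pw T j w2 a2 b2"
  then have "suffix w1 (take (Suc j) T)" "suffix w2 (take (Suc j) T)" unfolding Pw_def by auto
  then consider "suffix w1 w2" | "suffix w2 w1" using suffix_same_cases by blast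
  then show ?thesis using end_aux p1 p2 by metis
qed

lemma A_wit: "(s, t) \<in> MUS T 1 (Suc j) - MUS T 1 j \<Longrightarrow> t \<le> j \<Longrightarrow>
   \<exists>w a b. Pw T j w a b \<and> s \<le> a \<and> b \<le> t \<and> (a, b) \<noteq> (s, t)"
proof -
  assume h: "(s, t) \<in> MUS T 1 (Suc j) - MUS T 1 j" and tj: "t \<le> j"
  have m: "1 \<le> s" "s \<le> t" "occ (take (Suc j) T) (substr T s t) = 1"
     "\<forall>w. sublist w (substr T s t) \<and> w \<noteq> substr T s t \<longrightarrow> occ (take (Suc j) T) w \<ge> 2"
    using h unfolding MUS1 by auto
  have "s - 1 \<in> occs (take j T) (substr T s t)" using m tj jl by (intro sub_occ) auto
  then have "occ (take j T) (substr T s t) \<ge> 1" by (rule occ_ge1)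
  then have o1: "occ (take j T) (substr T s t) = 1" using m(3) occS' by (metis le_add1 le_antisym)
  then obtain w where w: "sublist w (substr T s t)" "w \<noteq> substr T s t" "\<not> occ (take j T) w \<ge> 2"
    using h m tj unfolding MUS1 by auto
  have w2: "occ (take (Suc j) T) w \<ge> 2" using m(4) w by auto
  then have suf: "suffix w (take (Suc j) T)" and ow: "occ (take j T) w = 1"
    using occS'[of w] w(3) by (auto split: if_splits)
  have "w \<noteq> []" using w(3) occS_Nil by auto
  then obtain a b where ab: "s \<le> a" "a \<le> b" "b \<le> t" "w = substr T a b"
    using sublist_substr[of s t T w] m w tj jl by auto
  then have "Pw T j w a b" unfolding Pw_def using suf ow m tj by auto
  moreover have "(a, b) \<noteq> (s, t)" using ab w by auto
  ultimately show ?thesis using ab by blast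
qed

lemma A_end: "(s, t) \<in> MUS T 1 (Suc j) - MUS T 1 j \<Longrightarrow> t \<le> j \<Longrightarrow> Pw T j w a b \<Longrightarrow> s \<le> a \<Longrightarrow> b \<le> t
   \<Longrightarrow> t = b \<or> t = Suc b"
proof (rule ccontr)
  assume h: "(s, t) \<in> MUS T 1 (Suc j) - MUS T 1 j" and tj: "t \<le> j" and P: "Pw T j w a b"
    and sa: "s \<le> a" and bt: "b \<le> t" and ne: "\<not> (t = b \<or> t = Suc b)"
  have m: "1 \<le> s" "s \<le> t"
     "\<forall>w. sublist w (substr T s t) \<and> w \<noteq> substr T s t \<longrightarrow> occ (take (Suc j) T) w \<ge> 2"
    using h unfolding MUS1 by auto
  have Pa: "1 \<le> a" "a \<le> b" "substr T a b = w" "occ (take j T) w = 1" using P unfolding Pw_def by auto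
  have b2: "b + 2 \<le> t" using ne bt by auto
  define v where "v = substr T s (t - 1)"
  have bt1: "b \<le> t - 1" "t - 1 \<le> length T" using b2 tj jl by auto
  obtain x y where xy: "v = x @ w @ y" "length x = a - s"
    using substr_decomp[OF m(1) sa Pa(2) bt1] Pa(3) unfolding v_def by auto
  have "sublist v (substr T s t)" unfolding v_def using m sa Pa b2 tj jl by (intro sublist_of_substr) auto
  moreover have "v \<noteq> substr T s t"
  proof
    assume "v = substr T s t"
    then have "length v = length (substr T s t)" by simp
    then show False unfolding v_def using m sa Pa b2 tj jl by (simp add: substr_len)
  qed
  ultimately have ov: "occ (take (Suc j) T) v \<ge> 2" using m(3) by auto
  have "occs (take j T) v \<subseteq> {s - 1}"
  proof
    fix q assume "q \<in> occs (take j T) v"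
    then have "q + length x \<in> occs (take j T) w" using xy occs_shift by metis
    moreover have "a - 1 \<in> occs (take j T) w" using Pa tj bt jl by (metis sub_occ less_imp_le order_trans)
    ultimately have "q + length x = a - 1" using occ_one_unique Pa(4) by metis
    then show "q \<in> {s - 1}" using xy(2) sa m by auto
  qed
  then have "occ (take j T) v \<le> 1" by (rule occ_le1)
  then have suf: "suffix v (take (Suc j) T)" and ov1: "occ (take j T) v = 1"
    using ov occS'[of v] by (auto split: if_splits)
  have "Pw T j v s (t - 1)" unfolding Pw_def using suf ov1 m b2 tj sa Pa v_def by auto
  then have "t - 1 = b" using end_lemma P by metis
  then show False using b2 by simp
qed

lemma A_noR: "MUS T 1 j - MUS T 1 (Suc j) = {} \<Longrightarrow> (s, t) \<in> MUS T 1 (Suc j) - MUS T 1 j \<Longrightarrow> t \<le> j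
   \<Longrightarrow> Pw T j w a b \<Longrightarrow> s \<le> a \<Longrightarrow> b \<le> t \<Longrightarrow> (a, b) \<noteq> (s, t) \<Longrightarrow> t \<noteq> b"
proof
  assume R: "MUS T 1 j - MUS T 1 (Suc j) = {}" and h: "(s, t) \<in> MUS T 1 (Suc j) - MUS T 1 j"
    and tj: "t \<le> j" and P: "Pw T j w a b" and sa: "s \<le> a" and bt: "b \<le> t" and ne: "(a, b) \<noteq> (s, t)"
    and tb: "t = b"
  have m: "1 \<le> s" "s \<le> t"
     "\<forall>w. sublist w (substr T s t) \<and> w \<noteq> substr T s t \<longrightarrow> occ (take (Suc j) T) w \<ge> 2"
    using h unfolding MUS1 by auto
  have Pa: "1 \<le> a" "a \<le> b" "substr T a b = w" "occ (take j T) w = 1" "suffix w (take (Suc j) T)"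
    using P unfolding Pw_def by auto
  have sa': "s < a" using ne sa tb by auto
  let ?Q = "\<lambda>w'. suffix w' (take (Suc j) T) \<and> occ (take j T) w' = 1"
  obtain w0 where w0: "?Q w0" and least: "\<And>w'. ?Q w' \<Longrightarrow> length w0 \<le> length w'"
    using ex_has_least_nat[of ?Q w length] Pa by blast
  have "w0 \<noteq> []" using w0 occS_Nil by auto
  have "occs (take j T) w0 \<noteq> {}" using w0 unfolding occ_card by auto
  then obtain p where p: "p \<in> occs (take j T) w0" by auto
  have sp: "substr T (Suc p) (p + length w0) = w0" "p + length w0 \<le> j"
    using occ_sub[OF p] jl by auto
  define a0 where "a0 = Suc p"
  define b0 where "b0 = p + length w0"
  have P0: "Pw T j w0 a0 b0" unfolding Pw_def a0_def b0_def using sp w0 \<open>w0 \<noteq> []\<close>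
    by (auto simp: Suc_le_eq)
  have "b0 = b" using end_lemma P0 P by metis
  have lw: "length w = Suc b - a" using Pa jl tj bt by (metis substr_len less_imp_le order_trans)
  have "length w0 \<le> length w" using least Pa by blast
  then have "a \<le> a0" using lw \<open>b0 = b\<close> unfolding a0_def b0_def using Pa by linarith
  have tl2: "occ (take j T) (tl w0) \<ge> 2"
  proof -
    have "suffix (tl w0) (take (Suc j) T)" using w0 suffix_trans' suffix_tl by blast
    moreover have "length (tl w0) < length w0" using \<open>w0 \<noteq> []\<close> by simp
    ultimately have "occ (take j T) (tl w0) \<noteq> 1" using least by force
    moreover have "occ (take j T) (tl w0) \<ge> occ (take j T) w0" by (rule occ_mono) simp
    ultimately show ?thesis using w0 by linarith
  qed
  have bl2: "occ (take j T) (butlast w0) \<ge> 2"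
  proof (rule ccontr)
    assume nb: "\<not> occ (take j T) (butlast w0) \<ge> 2"
    then have "butlast w0 \<noteq> []" using occS_Nil by auto
    then have "length (butlast w0) \<noteq> 0" by (simp del: length_butlast)
    moreover have "length (butlast w0) = length w0 - 1" by simp
    ultimately have lw0: "length w0 \<ge> 2" by linarith
    have bw: "butlast w0 = substr T a0 (b0 - 1)"
    proof -
      have "butlast w0 = take (length w0 - 1) w0" by (simp add: butlast_conv_take)
      also have "\<dots> = take (length w0 - 1) (drop p T)"
      proof -
        have e1: "take (length w0) (drop p T) = w0" using sp(1) unfolding substr_def by simp
        have "take (length w0 - 1) (take (length w0) (drop p T)) = take (length w0 - 1) (drop p T)" by simp
        then show ?thesis unfolding e1 .
      qed
      also have "\<dots> = substr T a0 (b0 - 1)" using lw0 unfolding a0_def b0_def substr_def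
        by (simp add: Suc_diff_le)
      finally show ?thesis .
    qed
    define v where "v = substr T s (t - 1)"
    have "sublist (butlast w0) v" unfolding bw v_def using lw0 sa' \<open>a \<le> a0\<close> \<open>b0 = b\<close> tb tj jl m
      unfolding a0_def b0_def by (intro sublist_of_substr) auto
    moreover have "sublist v (substr T s t)" unfolding v_def using sa' \<open>a \<le> a0\<close> Pa tb tj jl m
      by (intro sublist_of_substr) auto
    moreover have "v \<noteq> substr T s t"
    proof
      assume "v = substr T s t"
      then have "length v = length (substr T s t)" by simp
      then show False unfolding v_def using m sa' Pa tb tj jl by (simp add: substr_len)
    qed
    ultimately have "occ (take (Suc j) T) (butlast w0) \<ge> 2" using m(3) occ_mono by (meson order_trans)
    then have "?Q (butlast w0)" using occS'[of "butlast w0"] nb by (auto split: if_splits)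
    then have "length w0 \<le> length (butlast w0)" using least by blast
    moreover have "length (butlast w0) < length w0" using \<open>w0 \<noteq> []\<close> by simp
    ultimately show False by linarith
  qed
  have "(a0, b0) \<in> MUS T 1 j"
    unfolding MUS1
  proof (clarsimp, intro conjI)
    show "Suc 0 \<le> a0" "a0 \<le> b0" "b0 \<le> j" using P0 unfolding Pw_def by auto
    show "occ (take j T) (substr T a0 b0) = Suc 0" using P0 unfolding Pw_def by auto
    show "\<forall>x. sublist x (substr T a0 b0) \<and> x \<noteq> substr T a0 b0 \<longrightarrow> 2 \<le> occ (take j T) x"
    proof (intro allI impI)
      fix x assume "sublist x (substr T a0 b0) \<and> x \<noteq> substr T a0 b0"
      then have "sublist x w0" "x \<noteq> w0" using P0 unfolding Pw_def by auto
      then consider "sublist x (tl w0)" | "sublist x (butlast w0)" using proper_sublist by blast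
      then show "2 \<le> occ (take j T) x" using tl2 bl2 occ_mono by (metis order_trans)
    qed
  qed
  moreover have "(a0, b0) \<notin> MUS T 1 (Suc j)"
  proof
    assume "(a0, b0) \<in> MUS T 1 (Suc j)"
    then have "occ (take (Suc j) T) w0 = 1" using P0 unfolding MUS1 Pw_def by auto
    then show False using occS'[of w0] w0 by simp
  qed
  ultimately show False using R by blast
qed

lemma card_A: "card (MUS T 1 (Suc j) - MUS T 1 j) \<le> 3 \<and>
  (MUS T 1 j - MUS T 1 (Suc j) = {} \<longrightarrow> card (MUS T 1 (Suc j) - MUS T 1 j) \<le> 2)"
proof -
  let ?A = "MUS T 1 (Suc j) - MUS T 1 j"
  let ?M' = "MUS T 1 (Suc j)"
  define A1 where "A1 = {x \<in> ?M'. snd x = Suc j}"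
  have c1: "card A1 \<le> 1" unfolding A1_def using same_end jl by (metis Suc_leI)
  have fin: "\<And>e. finite {x \<in> ?M'. snd x = e}"
    by (rule finite_subset[of _ "MUS T 1 (Suc j)"]) (auto simp: finite_MUS)
  have ce: "\<And>e. card {x \<in> ?M'. snd x = e} \<le> 1" using same_end jl by (metis Suc_leI)
  show ?thesis
  proof (cases "\<exists>x \<in> ?A. snd x \<le> j")
    case False
    have "?A \<subseteq> A1"
    proof
      fix x assume x: "x \<in> ?A"
      then have "snd x \<le> Suc j" unfolding MUS1 by auto
      moreover have "\<not> snd x \<le> j"
      proof
        assume "snd x \<le> j"
        then show False using False x by blast
      qed
      ultimately show "x \<in> A1" using x unfolding A1_def by auto
    qed
    moreover have "finite A1" unfolding A1_def by (rule fin)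
    ultimately have "card ?A \<le> card A1" by (intro card_mono)
    then have "card ?A \<le> 1" using c1 by linarith
    then show ?thesis by simp
  next
    case True
    then obtain s0 t0 where st0: "(s0, t0) \<in> ?A" "t0 \<le> j" by auto
    then obtain w0 a0 e where we: "Pw T j w0 a0 e" using A_wit by blast
    define A2 where "A2 = {x \<in> ?M'. snd x = e}"
    define A3 where "A3 = {x \<in> ?M'. snd x = Suc e}"
    have sub: "?A \<subseteq> A1 \<union> A2 \<union> A3"
      and subR: "MUS T 1 j - MUS T 1 (Suc j) = {} \<Longrightarrow> ?A \<subseteq> A1 \<union> A3"
    proof -
      have *: "x \<in> A1 \<or> (x \<in> A2 \<or> x \<in> A3) \<and> (MUS T 1 j - MUS T 1 (Suc j) = {} \<longrightarrow> x \<in> A3)"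
        if x: "x \<in> ?A" for x
      proof -
        obtain s t where st: "x = (s, t)" by force
        have "t \<le> Suc j" using x st unfolding MUS1 by auto
        show ?thesis
        proof (cases "t = Suc j")
          case True then show ?thesis using x st unfolding A1_def by auto
        next
          case False
          then have tj: "t \<le> j" using \<open>t \<le> Suc j\<close> by simp
          obtain w a b where wab: "Pw T j w a b" "s \<le> a" "b \<le> t" "(a, b) \<noteq> (s, t)"
            using A_wit[of s t] x st tj by blast
          have "b = e" using end_lemma wab(1) we by metis
          have "t = b \<or> t = Suc b" using A_end[of s t w a b] x st tj wab by blast
          moreover have "MUS T 1 j - MUS T 1 (Suc j) = {} \<longrightarrow> t \<noteq> b"
            using A_noR[of s t w a b] x st tj wab by blast
          ultimately show ?thesis using x st \<open>b = e\<close> unfolding A2_def A3_def by auto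
        qed
      qed
      show "?A \<subseteq> A1 \<union> A2 \<union> A3" using * by blast
      show "MUS T 1 j - MUS T 1 (Suc j) = {} \<Longrightarrow> ?A \<subseteq> A1 \<union> A3" using * by blast
    qed
    have f1: "finite A1" "finite A2" "finite A3" unfolding A1_def A2_def A3_def using fin by auto
    have "card ?A \<le> card (A1 \<union> A2 \<union> A3)" using sub f1 by (intro card_mono) auto
    moreover have "card (A1 \<union> A2 \<union> A3) \<le> card (A1 \<union> A2) + card A3" by (rule card_Un_le)
    moreover have "card (A1 \<union> A2) \<le> card A1 + card A2" by (rule card_Un_le)
    moreover have "card A2 \<le> 1" "card A3 \<le> 1" unfolding A2_def A3_def by (rule ce)+
    ultimately have a3: "card ?A \<le> 3" using c1 by linarith
    have "MUS T 1 j - MUS T 1 (Suc j) = {} \<longrightarrow> card ?A \<le> 2"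
    proof
      assume "MUS T 1 j - MUS T 1 (Suc j) = {}"
      then have "card ?A \<le> card (A1 \<union> A3)" using subR f1 by (intro card_mono) auto
      moreover have "card (A1 \<union> A3) \<le> card A1 + card A3" by (rule card_Un_le)
      moreover have "card A3 \<le> 1" unfolding A3_def by (rule ce)
      ultimately show "card ?A \<le> 2" using c1 by linarith
    qed
    then show ?thesis using a3 by simp
  qed
qed

end




lemma occs1: "p \<in> occs S [x] \<longleftrightarrow> p < length S \<and> S ! p = x"
  unfolding occs_nth by auto

lemma occs2: "p \<in> occs S [x, y] \<longleftrightarrow> Suc (Suc p) \<le> length S \<and> S ! p = x \<and> S ! Suc p = y"
  unfolding occs_nth by (auto simp: less_Suc_eq)

lemma occs_take: "p \<in> occs (take n W) w \<longleftrightarrow> p \<in> occs W w \<and> p + length w \<le> n"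
  unfolding occs_nth by auto

lemma sublist2: "sublist w [x, y] \<Longrightarrow> w \<noteq> [x, y] \<Longrightarrow> w = [] \<or> w = [x] \<or> w = [y]"
proof -
  assume "sublist w [x, y]" "w \<noteq> [x, y]"
  then have "prefix w [x, y] \<or> prefix w [y] \<or> w = []" by (simp add: sublist_Cons_right)
  then show ?thesis using \<open>w \<noteq> [x, y]\<close> by (auto simp: prefix_Cons)
qed

lemma occ_eq1: "p \<in> occs S w \<Longrightarrow> (\<And>q. q \<in> occs S w \<Longrightarrow> q = p) \<Longrightarrow> occ S w = 1"
proof -
  assume "p \<in> occs S w" "\<And>q. q \<in> occs S w \<Longrightarrow> q = p"
  then have "occs S w = {p}" by blast
  then show ?thesis unfolding occ_card by simp
qed

lemma substr_nth: "1 \<le> s \<Longrightarrow> t \<le> length W \<Longrightarrow> substr W s t = map (\<lambda>q. W ! (s - 1 + q)) [0..<Suc t - s]"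
  unfolding substr_def by (intro nth_equalityI) auto

section \<open>Example with difference 2\<close>

context
  fixes a b c :: 'a and k :: nat
  assumes ab: "a \<noteq> b" and ac: "a \<noteq> c" and bc: "b \<noteq> c" and k2: "2 \<le> k"
begin

definition "W2 = replicate k a @ [b, c, c, b]"

lemma lenW2: "length W2 = k + 4" unfolding W2_def by simp

lemma nthW2: "p < k + 4 \<Longrightarrow> W2 ! p = (if p < k then a else if p = k then b else if p = Suc k then c
   else if p = k + 2 then c else b)"
proof -
  assume p: "p < k + 4"
  show ?thesis
  proof (cases "p < k")
    case True then show ?thesis unfolding W2_def by (simp add: nth_append)
  next
    case False
    then obtain d where d: "p = k + d" "d < 4" using p by (metis add_less_cancel_left le_Suc_ex not_less)
    then have "d = 0 \<or> d = 1 \<or> d = 2 \<or> d = 3" by arith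
    then show ?thesis using d unfolding W2_def by (auto simp: nth_append)
  qed
qed

lemma sub_ab: "substr W2 k (k + 1) = [a, b]"
  using k2 by (simp add: substr_nth lenW2 nthW2 upt_rec)

lemma sub_bc: "substr W2 (k + 1) (k + 2) = [b, c]"
  using k2 by (simp add: substr_nth lenW2 nthW2 upt_rec)

lemma sub_cb: "substr W2 (k + 3) (k + 4) = [c, b]"
  using k2 by (simp add: substr_nth lenW2 nthW2 upt_rec)

lemma W2_occ_ab: "occ W2 [a, b] = 1"
  by (rule occ_eq1[of "k - 1"]) (use k2 ab ac bc in \<open>auto simp: occs2 lenW2 nthW2 split: if_splits\<close>)

lemma W2_occ_bc: "occ W2 [b, c] = 1"
  by (rule occ_eq1[of "k"]) (use k2 ab ac bc in \<open>auto simp: occs2 lenW2 nthW2 split: if_splits\<close>)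

lemma W2_occ_cb: "occ W2 [c, b] = 1"
  by (rule occ_eq1[of "k + 2"]) (use k2 ab ac bc in \<open>auto simp: occs2 lenW2 nthW2 split: if_splits\<close>)

lemma W2_occ_a: "occ W2 [a] \<ge> 2"
  by (rule occ_ge2[of 0 _ _ 1]) (use k2 in \<open>auto simp: occs1 lenW2 nthW2\<close>)

lemma W2_occ_b: "occ W2 [b] \<ge> 2"
  by (rule occ_ge2[of k _ _ "k + 3"]) (use k2 in \<open>auto simp: occs1 lenW2 nthW2\<close>)

lemma W2_occ_c: "occ W2 [c] \<ge> 2"
  by (rule occ_ge2[of "k + 1" _ _ "k + 2"]) (use k2 in \<open>auto simp: occs1 lenW2 nthW2\<close>)

lemma S2_occ_b: "occ (take (k + 3) W2) [b] = 1"
  by (rule occ_eq1[of k]) (use k2 ab ac bc in \<open>auto simp: occs1 lenW2 nthW2 split: if_splits\<close>)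

lemma W2_Nil: "occ W2 [] \<ge> 2" by (simp add: occ_Nil lenW2)

lemma in2: "sublist w [x, y] \<Longrightarrow> w \<noteq> [x, y] \<Longrightarrow> occ W2 [x] \<ge> 2 \<Longrightarrow> occ W2 [y] \<ge> 2 \<Longrightarrow> occ W2 w \<ge> 2"
  using sublist2 W2_Nil by metis

lemma take_W2: "take (Suc (k + 3)) W2 = W2" by (simp add: lenW2)

lemma A2_elems: "{(k, k + 1), (k + 1, k + 2), (k + 3, k + 4)} \<subseteq> MUS W2 1 (Suc (k + 3)) - MUS W2 1 (k + 3)"
proof -
  have "(k, k + 1) \<in> MUS W2 1 (Suc (k + 3))"
    unfolding MUS1 take_W2 using k2 sub_ab W2_occ_ab in2 W2_occ_a W2_occ_b by auto
  moreover have "(k + 1, k + 2) \<in> MUS W2 1 (Suc (k + 3))"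
    unfolding MUS1 take_W2 using k2 sub_bc W2_occ_bc in2 W2_occ_c W2_occ_b by auto
  moreover have "(k + 3, k + 4) \<in> MUS W2 1 (Suc (k + 3))"
    unfolding MUS1 take_W2 using k2 sub_cb W2_occ_cb in2 W2_occ_c W2_occ_b by auto
  moreover have "(k, k + 1) \<notin> MUS W2 1 (k + 3)"
  proof
    assume "(k, k + 1) \<in> MUS W2 1 (k + 3)"
    then have "\<forall>w. sublist w [a, b] \<and> w \<noteq> [a, b] \<longrightarrow> occ (take (k + 3) W2) w \<ge> 2"
      unfolding MUS1 mem_Collect_eq case_prod_conv sub_ab by blast
    then have "occ (take (k + 3) W2) [b] \<ge> 2" using ab by (auto simp: sublist_Cons_right)
    then show False using S2_occ_b by simp
  qed
  moreover have "(k + 1, k + 2) \<notin> MUS W2 1 (k + 3)"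
  proof
    assume "(k + 1, k + 2) \<in> MUS W2 1 (k + 3)"
    then have "\<forall>w. sublist w [b, c] \<and> w \<noteq> [b, c] \<longrightarrow> occ (take (k + 3) W2) w \<ge> 2"
      unfolding MUS1 mem_Collect_eq case_prod_conv sub_bc by blast
    then have "occ (take (k + 3) W2) [b] \<ge> 2" using bc by (auto simp: sublist_Cons_right)
    then show False using S2_occ_b by simp
  qed
  moreover have "(k + 3, k + 4) \<notin> MUS W2 1 (k + 3)" unfolding MUS1 by auto
  ultimately show ?thesis by auto
qed

lemma ex2: "card (MUS W2 1 (Suc (k + 3)) - MUS W2 1 (k + 3)) = 3 \<and> card (MUS W2 1 (k + 3) - MUS W2 1 (Suc (k + 3))) = 1"
proof -
  have j: "1 \<le> k + 3" "k + 3 < length W2" by (auto simp: lenW2)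
  have "card {(k, k + 1), (k + 1, k + 2), (k + 3, k + 4)} = 3" by simp
  then have "card (MUS W2 1 (Suc (k + 3)) - MUS W2 1 (k + 3)) \<ge> 3"
    using A2_elems card_mono finite_MUS by (metis finite_Diff)
  moreover note card_A[OF j] card_R[OF j]
  ultimately have A3: "card (MUS W2 1 (Suc (k + 3)) - MUS W2 1 (k + 3)) = 3"
    and Rne: "MUS W2 1 (k + 3) - MUS W2 1 (Suc (k + 3)) \<noteq> {}" by auto
  have "finite (MUS W2 1 (k + 3) - MUS W2 1 (Suc (k + 3)))" by (rule finite_Diff[OF finite_MUS])
  then have "card (MUS W2 1 (k + 3) - MUS W2 1 (Suc (k + 3))) \<noteq> 0"
    using Rne by simp
  then show ?thesis using A3 card_R[OF j] by linarith
qed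

end




context
  fixes a b :: 'a and k :: nat
  assumes ab: "a \<noteq> b" and k2: "2 \<le> k"
begin

definition "W1 = [a, a] @ replicate k b @ [a, a]"

lemma lenW1: "length W1 = k + 4" unfolding W1_def by simp

lemma nthW1: "p < k + 4 \<Longrightarrow> W1 ! p = (if p < 2 then a else if p < k + 2 then b else a)"
proof -
  assume p: "p < k + 4"
  consider "p < 2" | "2 \<le> p \<and> p < k + 2" | "k + 2 \<le> p" by linarith
  then show ?thesis
  proof cases
    case 1 then have "p = 0 \<or> p = 1" by arith
    then show ?thesis unfolding W1_def by auto
  next
    case 2 then show ?thesis unfolding W1_def by (auto simp: nth_append)
  next
    case 3 then have "p = k + 2 \<or> p = k + 3" using p by arith
    then show ?thesis unfolding W1_def by (auto simp: nth_append)
  qed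
qed

abbreviation "S1 \<equiv> take (k + 3) W1"

lemma take_W1: "take (Suc (k + 3)) W1 = W1" by (simp add: lenW1)

lemma sub_ab1: "substr W1 2 3 = [a, b]"
  using k2 by (simp add: substr_nth lenW1 nthW1 upt_rec)

lemma sub_ba1: "substr W1 (k + 2) (k + 3) = [b, a]"
  using k2 by (simp add: substr_nth lenW1 nthW1 upt_rec)

lemma sub_aa1: "substr W1 1 2 = [a, a]"
  using k2 by (simp add: substr_nth lenW1 nthW1 upt_rec)

lemma sub_bk1: "substr W1 3 (k + 2) = replicate k b"
  using k2 by (intro nth_equalityI) (auto simp: substr_nth lenW1 nthW1)

lemma occ_ab1: "occ W1 [a, b] = 1" "occ S1 [a, b] = 1"
  by (rule occ_eq1[of 1]; use k2 ab in \<open>auto simp: occs_take occs2 lenW1 nthW1 split: if_splits\<close>)+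

lemma occ_ba1: "occ W1 [b, a] = 1" "occ S1 [b, a] = 1"
  by (rule occ_eq1[of "k + 1"]; use k2 ab in \<open>auto simp: occs_take occs2 lenW1 nthW1 split: if_splits\<close>)+

lemma occ_aa1: "occ S1 [a, a] = 1"
  by (rule occ_eq1[of 0]; use k2 ab in \<open>auto simp: occs_take occs2 lenW1 nthW1 split: if_splits\<close>)

lemma occ_aaW: "occ W1 [a, a] \<ge> 2"
  by (rule occ_ge2[of 0 _ _ "k + 2"]) (use k2 in \<open>auto simp: occs2 lenW1 nthW1\<close>)

lemma occ_a1: "occ W1 [a] \<ge> 2" "occ S1 [a] \<ge> 2"
  by (rule occ_ge2[of 0 _ _ 1]; use k2 in \<open>auto simp: occs_take occs1 lenW1 nthW1\<close>)+

lemma occ_b1: "occ W1 [b] \<ge> 2" "occ S1 [b] \<ge> 2"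
  by (rule occ_ge2[of 2 _ _ 3]; use k2 in \<open>auto simp: occs_take occs1 lenW1 nthW1\<close>)+

lemma occ_bk1: "occ W1 (replicate k b) = 1" "occ S1 (replicate k b) = 1"
proof -
  have 2: "2 \<in> occs W1 (replicate k b)" using k2 by (auto simp: occs_nth lenW1 nthW1)
  have u: "q = 2" if q: "q \<in> occs W1 (replicate k b)" for q
  proof -
    have q1: "q + k \<le> k + 4" "\<forall>r<k. W1 ! (q + r) = b" using q by (auto simp: occs_nth lenW1)
    have "q \<ge> 2"
    proof (rule ccontr)
      assume "\<not> q \<ge> 2"
      then have "W1 ! (q + 0) = a" using nthW1[of q] by auto
      moreover have "W1 ! (q + 0) = b" using spec[OF q1(2), of 0] k2 by simp
      ultimately show False using ab by simp
    qed
    moreover have "q \<le> 2"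
    proof (rule ccontr)
      assume "\<not> q \<le> 2"
      then have "W1 ! (q + (k - 1)) = a" using nthW1[of "q + (k - 1)"] q1 k2 by auto
      moreover have "W1 ! (q + (k - 1)) = b" using spec[OF q1(2), of "k - 1"] k2 by simp
      ultimately show False using ab by simp
    qed
    ultimately show ?thesis by simp
  qed
  show "occ W1 (replicate k b) = 1" using 2 u by (rule occ_eq1)
  show "occ S1 (replicate k b) = 1"
  proof (rule occ_eq1[of 2])
    show "2 \<in> occs S1 (replicate k b)" using 2 k2 unfolding occs_take by simp
  next
    fix q assume "q \<in> occs S1 (replicate k b)"
    then have "q \<in> occs W1 (replicate k b)" unfolding occs_take by blast
    then show "q = 2" by (rule u)
  qed
qed

lemma occ_br: "r < k \<Longrightarrow> occ W1 (replicate r b) \<ge> 2 \<and> occ S1 (replicate r b) \<ge> 2"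
proof -
  assume r: "r < k"
  have s: "2 \<in> occs S1 (replicate r b)" "3 \<in> occs S1 (replicate r b)"
    using r k2 by (auto simp: occs_nth lenW1 nthW1)
  then have w: "2 \<in> occs W1 (replicate r b)" "3 \<in> occs W1 (replicate r b)"
    unfolding occs_take by auto
  have "(2::nat) \<noteq> 3" by simp
  then show ?thesis using occ_ge2[OF s(1) s(2)] occ_ge2[OF w(1) w(2)] by blast
qed

lemma in2': "sublist w [x, y] \<Longrightarrow> w \<noteq> [x, y] \<Longrightarrow> occ X [x] \<ge> 2 \<Longrightarrow> occ X [y] \<ge> 2 \<Longrightarrow> length X \<ge> 1
   \<Longrightarrow> occ X w \<ge> 2"
proof -
  assume h: "sublist w [x, y]" "w \<noteq> [x, y]" "occ X [x] \<ge> 2" "occ X [y] \<ge> 2" "length X \<ge> 1"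
  have "w = [] \<or> w = [x] \<or> w = [y]" by (rule sublist2[OF h(1) h(2)])
  then show ?thesis
  proof (elim disjE)
    assume "w = []" then show ?thesis using h(5) by (simp add: occ_Nil)
  next
    assume "w = [x]" then show ?thesis using h(3) by simp
  next
    assume "w = [y]" then show ?thesis using h(4) by simp
  qed
qed

lemma lenS1: "length S1 = k + 3" by (simp add: lenW1)

lemma X1: "(2, 3) \<in> MUS W1 1 (Suc (k + 3))" "(2, 3) \<in> MUS W1 1 (k + 3)"
  unfolding MUS1 mem_Collect_eq case_prod_conv take_W1 sub_ab1 using k2 occ_ab1 occ_a1 occ_b1 in2'[of _ a b W1] in2'[of _ a b S1] lenS1 lenW1
  by auto

lemma X2: "(k + 2, k + 3) \<in> MUS W1 1 (Suc (k + 3))" "(k + 2, k + 3) \<in> MUS W1 1 (k + 3)"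
  unfolding MUS1 mem_Collect_eq case_prod_conv take_W1 sub_ba1 using k2 occ_ba1 occ_a1 occ_b1 in2'[of _ b a W1] in2'[of _ b a S1] lenS1 lenW1
  by auto

lemma sub_rep: "sublist w (replicate k b) \<Longrightarrow> w \<noteq> replicate k b \<Longrightarrow> \<exists>r<k. w = replicate r b"
proof -
  assume s: "sublist w (replicate k b)" "w \<noteq> replicate k b"
  then have "set w \<subseteq> {b}" using set_mono_sublist by fastforce
  then have "\<forall>y\<in>set w. y = b" by blast
  then have w: "w = replicate (length w) b" using replicate_length_same by metis
  have "length w \<le> k" using s sublist_length_le by fastforce
  then have "length w < k" using s w by (metis le_neq_implies_less)
  then show ?thesis using w by blast
qed

lemma X3: "(3, k + 2) \<in> MUS W1 1 (Suc (k + 3))" "(3, k + 2) \<in> MUS W1 1 (k + 3)"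
  unfolding MUS1 mem_Collect_eq case_prod_conv take_W1 sub_bk1 using k2 occ_bk1 occ_br sub_rep by auto

lemma R1: "(1, 2) \<in> MUS W1 1 (k + 3) - MUS W1 1 (Suc (k + 3))"
proof -
  have "(1, 2) \<in> MUS W1 1 (k + 3)"
    unfolding MUS1 mem_Collect_eq case_prod_conv sub_aa1 using k2 occ_aa1 occ_a1 in2'[of _ a a S1] lenS1 by auto
  moreover have "(1, 2) \<notin> MUS W1 1 (Suc (k + 3))"
    unfolding MUS1 mem_Collect_eq case_prod_conv take_W1 sub_aa1 using occ_aaW by auto
  ultimately show ?thesis by blast
qed

lemma occ_move2: "p \<in> occs W1 u \<Longrightarrow> q + length u \<le> length W1 \<Longrightarrow> (\<forall>r<length u. W1 ! (q + r) = W1 ! (p + r))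
   \<Longrightarrow> p \<noteq> q \<Longrightarrow> occ W1 u \<ge> 2"
  using occs_move occ_ge2 by metis

definition cls :: "nat \<Rightarrow> nat" where
  "cls i = (if 2 \<le> i \<and> i < k + 2 then 1 else 0)"

lemma cls1: "2 \<le> i \<Longrightarrow> i < k + 2 \<Longrightarrow> cls i = 1" unfolding cls_def by simp
lemma cls0: "i < 2 \<or> k + 2 \<le> i \<Longrightarrow> cls i = 0" unfolding cls_def by auto

lemma cls_eq: "i < k + 4 \<Longrightarrow> i' < k + 4 \<Longrightarrow> cls i = cls i' \<Longrightarrow> W1 ! i = W1 ! i'"
  using nthW1[of i] nthW1[of i'] unfolding cls_def by (auto split: if_splits)

lemma moveW1: "p \<in> occs W1 u \<Longrightarrow> q + length u \<le> k + 4 \<Longrightarrow> p \<noteq> q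
  \<Longrightarrow> (\<forall>r<length u. cls (q + r) = cls (p + r)) \<Longrightarrow> occ W1 u \<ge> 2"
proof -
  assume p: "p \<in> occs W1 u" and q: "q + length u \<le> k + 4" and ne: "p \<noteq> q"
    and c: "\<forall>r<length u. cls (q + r) = cls (p + r)"
  have pl: "p + length u \<le> k + 4" using p unfolding occs_def lenW1 by auto
  have "\<forall>r<length u. W1 ! (q + r) = W1 ! (p + r)"
  proof (intro allI impI)
    fix r assume "r < length u"
    then show "W1 ! (q + r) = W1 ! (p + r)" using cls_eq[of "q + r" "p + r"] c pl q by auto
  qed
  then show ?thesis using occ_move2 p q ne lenW1 by metis
qed

lemma A1_empty: "MUS W1 1 (Suc (k + 3)) \<subseteq> MUS W1 1 (k + 3)"
proof
  fix x assume x: "x \<in> MUS W1 1 (Suc (k + 3))"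
  obtain s t where st: "x = (s, t)" by force
  have lw: "Suc (k + 3) \<le> length W1" by (simp add: lenW1)
  have m: "1 \<le> s" "s \<le> t" "t \<le> k + 4" "occ W1 (substr W1 s t) = 1" using x st unfolding MUS1 take_W1 by auto
  have oc: "s - 1 \<in> occs W1 (substr W1 s t)"
    using sub_occ[of s t "length W1" W1] m by (simp add: lenW1)
  have lu: "length (substr W1 s t) = Suc t - s" using m by (simp add: substr_len lenW1)
  consider "s \<le> 2 \<and> 3 \<le> t" | "s \<le> 3 \<and> k + 2 \<le> t" | "s \<le> k + 2 \<and> k + 3 \<le> t"
    | "t \<le> 2" | "3 \<le> s \<and> t \<le> k + 2 \<and> (4 \<le> s \<or> t \<le> k + 1)" | "k + 3 \<le> s" by linarith
  then show "x \<in> MUS W1 1 (k + 3)"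
  proof cases
    case 1 then show ?thesis using nonnest[OF lw, of s t 2 3] X1 x st by auto
  next
    case 2 then show ?thesis using nonnest[OF lw, of s t 3 "k + 2"] X3 x st by auto
  next
    case 3 then show ?thesis using nonnest[OF lw, of s t "k + 2" "k + 3"] X2 x st by auto
  next
    case 4
    have "\<forall>r<length (substr W1 s t). cls (s - 1 + (k + 2) + r) = cls (s - 1 + r)"
    proof (intro allI impI)
      fix r assume "r < length (substr W1 s t)"
      then have "r < Suc t - s" using lu by simp
      then have "s - 1 + r < 2" "k + 2 \<le> s - 1 + (k + 2) + r" using 4 m by linarith+
      then show "cls (s - 1 + (k + 2) + r) = cls (s - 1 + r)" using cls0 by metis
    qed
    moreover have "s - 1 + (k + 2) + length (substr W1 s t) \<le> k + 4" using lu 4 m by linarith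
    moreover have "s - 1 \<noteq> s - 1 + (k + 2)" by simp
    ultimately have "occ W1 (substr W1 s t) \<ge> 2" using moveW1[OF oc] by blast
    then show ?thesis using m by simp
  next
    case 5
    then consider "4 \<le> s" | "t \<le> k + 1" by blast
    then show ?thesis
    proof cases
      case 1
      have "\<forall>r<length (substr W1 s t). cls (s - 2 + r) = cls (s - 1 + r)"
      proof (intro allI impI)
        fix r assume "r < length (substr W1 s t)"
        then have "r < Suc t - s" using lu by simp
        then have "2 \<le> s - 2 + r" "s - 2 + r < k + 2" "2 \<le> s - 1 + r" "s - 1 + r < k + 2"
          using 5 1 m by linarith+
        then show "cls (s - 2 + r) = cls (s - 1 + r)" using cls1 by metis
      qed
      moreover have "s - 2 + length (substr W1 s t) \<le> k + 4" using lu 5 m by linarith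
      moreover have "s - 1 \<noteq> s - 2" using 1 by linarith
      ultimately have "occ W1 (substr W1 s t) \<ge> 2" using moveW1[OF oc] by blast
      then show ?thesis using m by simp
    next
      case 2
      have "\<forall>r<length (substr W1 s t). cls (s + r) = cls (s - 1 + r)"
      proof (intro allI impI)
        fix r assume "r < length (substr W1 s t)"
        then have "r < Suc t - s" using lu by simp
        then have "2 \<le> s + r" "s + r < k + 2" "2 \<le> s - 1 + r" "s - 1 + r < k + 2"
          using 5 2 m by linarith+
        then show "cls (s + r) = cls (s - 1 + r)" using cls1 by metis
      qed
      moreover have "s + length (substr W1 s t) \<le> k + 4" using lu 5 m by linarith
      moreover have "s - 1 \<noteq> s" using m by linarith
      ultimately have "occ W1 (substr W1 s t) \<ge> 2" using moveW1[OF oc] by blast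
      then show ?thesis using m by simp
    qed
  next
    case 6
    have "\<forall>r<length (substr W1 s t). cls (s - 1 - (k + 2) + r) = cls (s - 1 + r)"
    proof (intro allI impI)
      fix r assume "r < length (substr W1 s t)"
      then have "r < Suc t - s" using lu by simp
      then have "s - 1 - (k + 2) + r < 2" "k + 2 \<le> s - 1 + r" using 6 m by linarith+
      then show "cls (s - 1 - (k + 2) + r) = cls (s - 1 + r)" using cls0 by metis
    qed
    moreover have "s - 1 - (k + 2) + length (substr W1 s t) \<le> k + 4" using lu 6 m by linarith
    moreover have "s - 1 \<noteq> s - 1 - (k + 2)" using 6 by linarith
    ultimately have "occ W1 (substr W1 s t) \<ge> 2" using moveW1[OF oc] by blast
    then show ?thesis using m by simp
  qed
qed

lemma ex1: "card (MUS W1 1 (Suc (k + 3)) - MUS W1 1 (k + 3)) = 0 \<and> card (MUS W1 1 (k + 3) - MUS W1 1 (Suc (k + 3))) = 1"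
proof -
  have j: "1 \<le> k + 3" "k + 3 < length W1" by (auto simp: lenW1)
  have "card (MUS W1 1 (k + 3) - MUS W1 1 (Suc (k + 3))) \<ge> 1"
    using R1 finite_MUS by (metis card_0_eq finite_Diff empty_iff less_one not_le)
  then have c1: "card (MUS W1 1 (k + 3) - MUS W1 1 (Suc (k + 3))) = 1" using card_R[OF j] by linarith
  have e: "MUS W1 1 (Suc (k + 3)) - MUS W1 1 (k + 3) = {}" using A1_empty by blast
  show ?thesis unfolding e using c1 by simp
qed

end




lemma substr_shift: "1 \<le> i \<Longrightarrow> i \<le> s \<Longrightarrow> substr T s t = substr (drop (i - 1) T) (s + 1 - i) (t + 1 - i)"
proof -
  assume h: "1 \<le> i" "i \<le> s"
  have e1: "drop (s + 1 - i - 1) (drop (i - 1) T) = drop (s - 1) T"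
  proof -
    have "s + 1 - i - 1 + (i - 1) = s - 1" using h by arith
    then show ?thesis by (simp add: drop_drop)
  qed
  have e2: "Suc (t + 1 - i) - (s + 1 - i) = Suc t - s" using h by arith
  show ?thesis unfolding substr_def e1 e2 ..
qed

definition shf :: "nat \<Rightarrow> nat \<times> nat \<Rightarrow> nat \<times> nat" where
  "shf d x = (fst x + d, snd x + d)"

lemma inj_shf: "inj (shf d)"
  unfolding shf_def inj_def by auto

lemma MUS_shift: "1 \<le> i \<Longrightarrow> MUS T i j = shf (i - 1) ` MUS (drop (i - 1) T) 1 (j + 1 - i)"
proof -
  assume i: "1 \<le> i"
  define D where "D = drop (i - 1) T"
  have win: "substr T i j = substr D 1 (j + 1 - i)" using substr_shift[OF i order_refl] D_def by simp
  show ?thesis unfolding D_def[symmetric]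
  proof (intro set_eqI iffI)
    fix x assume x: "x \<in> MUS T i j"
    obtain s t where st: "x = (s, t)" by force
    have m: "i \<le> s" "s \<le> t" "t \<le> j" "occ (substr T i j) (substr T s t) = 1"
      "\<forall>w. sublist w (substr T s t) \<and> w \<noteq> substr T s t \<longrightarrow> occ (substr T i j) w \<ge> 2"
      using x st unfolding MUS_def by auto
    have e: "substr T s t = substr D (s + 1 - i) (t + 1 - i)" using substr_shift[OF i m(1)] D_def by simp
    have "(s + 1 - i, t + 1 - i) \<in> MUS D 1 (j + 1 - i)"
      unfolding MUS_def mem_Collect_eq case_prod_conv using m i unfolding e win by auto
    moreover have "x = shf (i - 1) (s + 1 - i, t + 1 - i)" using st m i unfolding shf_def by auto
    ultimately show "x \<in> shf (i - 1) ` MUS D 1 (j + 1 - i)" by blast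
  next
    fix x assume "x \<in> shf (i - 1) ` MUS D 1 (j + 1 - i)"
    then obtain s t where st: "(s, t) \<in> MUS D 1 (j + 1 - i)" "x = shf (i - 1) (s, t)" by force
    have m: "1 \<le> s" "s \<le> t" "t \<le> j + 1 - i" "occ (substr D 1 (j + 1 - i)) (substr D s t) = 1"
      "\<forall>w. sublist w (substr D s t) \<and> w \<noteq> substr D s t \<longrightarrow> occ (substr D 1 (j + 1 - i)) w \<ge> 2"
      using st unfolding MUS_def by auto
    have "i \<le> s + (i - 1)" using m by simp
    from substr_shift[OF i this, of T "t + (i - 1)"]
    have e: "substr T (s + (i - 1)) (t + (i - 1)) = substr D s t" using D_def m i by simp
    have "(s + (i - 1), t + (i - 1)) \<in> MUS T i j"
      unfolding MUS_def mem_Collect_eq case_prod_conv e win using m i by auto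
    then show "x \<in> MUS T i j" using st unfolding shf_def by simp
  qed
qed

lemma substr_pad: "1 \<le> s \<Longrightarrow> s \<le> t \<Longrightarrow> t \<le> length W \<Longrightarrow> substr (W @ P) s t = substr W s t"
  unfolding substr_def by simp

lemma MUS_pad: "J \<le> length W \<Longrightarrow> MUS (W @ P) 1 J = MUS W 1 J"
proof -
  assume J: "J \<le> length W"
  have tk: "take J (W @ P) = take J W" using J by simp
  show ?thesis
  proof (intro set_eqI)
    fix x :: "nat \<times> nat"
    obtain s t where st: "x = (s, t)" by force
    show "x \<in> MUS (W @ P) 1 J \<longleftrightarrow> x \<in> MUS W 1 J"
    proof (cases "1 \<le> s \<and> s \<le> t \<and> t \<le> J")
      case True
      then have "substr (W @ P) s t = substr W s t" using J by (intro substr_pad) auto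
      then show ?thesis unfolding st MUS1 mem_Collect_eq case_prod_conv tk by simp
    next
      case False
      then show ?thesis unfolding st MUS1 by auto
    qed
  qed
qed

lemma fin_arith: "finite A \<Longrightarrow> finite B \<Longrightarrow>
  card (symdiff A B) = card (A - B) + card (B - A) \<and>
  int (card A) - int (card B) = int (card (A - B)) - int (card (B - A))"
proof -
  assume f: "finite A" "finite B"
  have "card (symdiff A B) = card (A - B) + card (B - A)"
    unfolding symdiff_def using f by (intro card_Un_disjoint) auto
  moreover have "card A = card (A \<inter> B) + card (A - B)" by (rule card_Int_Diff[OF f(1)])
  moreover have "card B = card (B \<inter> A) + card (B - A)" by (rule card_Int_Diff[OF f(2)])
  moreover have "B \<inter> A = A \<inter> B" by auto
  ultimately show ?thesis by simp
qed

lemma img_quant: "inj f \<Longrightarrow> card (symdiff (f ` A) (f ` B)) = card (symdiff A B) \<and>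
   int (card (f ` A)) - int (card (f ` B)) = int (card A) - int (card B)"
proof -
  assume f: "inj f"
  have "symdiff (f ` A) (f ` B) = f ` symdiff A B" unfolding symdiff_def using f
    by (simp add: image_Un image_set_diff)
  then show ?thesis using f by (simp add: card_image inj_on_subset)
qed

lemma part1:
  assumes "1 \<le> i" "i \<le> j" "j < length T"
  shows "card (symdiff (MUS T i (j + 1)) (MUS T i j)) \<le> 4
            \<and> -1 \<le> int (card (MUS T i (j + 1))) - int (card (MUS T i j))
            \<and> int (card (MUS T i (j + 1))) - int (card (MUS T i j)) \<le> 2"
proof -
  define D where "D = drop (i - 1) T"
  define J where "J = j + 1 - i"
  have J: "1 \<le> J" "J < length D" using assms unfolding J_def D_def by auto
  have e1: "MUS T i j = shf (i - 1) ` MUS D 1 J" using MUS_shift[OF assms(1)] unfolding D_def J_def by simp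
  have e2: "MUS T i (j + 1) = shf (i - 1) ` MUS D 1 (Suc J)"
    using MUS_shift[OF assms(1), of T "j + 1"] assms unfolding D_def J_def by (simp add: Suc_diff_le)
  let ?A = "MUS D 1 (Suc J)" and ?B = "MUS D 1 J"
  have q: "card (symdiff ?A ?B) = card (?A - ?B) + card (?B - ?A) \<and>
     int (card ?A) - int (card ?B) = int (card (?A - ?B)) - int (card (?B - ?A))"
    by (rule fin_arith) (rule finite_MUS)+
  have cA: "card (?A - ?B) \<le> 3" "?B - ?A = {} \<longrightarrow> card (?A - ?B) \<le> 2" using card_A[OF J] by auto
  have cR: "card (?B - ?A) \<le> 1" using card_R[OF J] .
  have cR0: "?B - ?A \<noteq> {} \<Longrightarrow> card (?B - ?A) = 1"
    using cR finite_MUS by (metis One_nat_def card_0_eq finite_Diff le_SucE le_zero_eq)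
  have main: "card (symdiff ?A ?B) \<le> 4 \<and> -1 \<le> int (card ?A) - int (card ?B) \<and> int (card ?A) - int (card ?B) \<le> 2"
  proof (cases "?B - ?A = {}")
    case True then show ?thesis using q cA cR by auto
  next
    case False then show ?thesis using q cA cR0 by auto
  qed
  show ?thesis unfolding e1 e2 using img_quant[OF inj_shf] main by metis
qed

lemma three_elems: "finite S \<Longrightarrow> 3 \<le> card S \<Longrightarrow> \<exists>a b c. a \<in> S \<and> b \<in> S \<and> c \<in> S \<and> a \<noteq> b \<and> a \<noteq> c \<and> b \<noteq> c"
proof -
  assume "finite S" "3 \<le> card S"
  then obtain U where U: "U \<subseteq> S" "card U = 3" by (meson obtain_subset_with_card_n)
  then obtain x y z where "U = {x, y, z}" "x \<noteq> y" "y \<noteq> z" "x \<noteq> z" unfolding card_3_iff by blast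
  then show ?thesis using U by blast
qed

lemma reduce:
  fixes x :: 'a and W :: "'a list"
  assumes "1 \<le> i" "i \<le> j" "j < n" "length W = Suc (j + 1 - i)"
  defines "T \<equiv> replicate (i - 1) x @ W @ replicate (n - Suc j) x"
  shows "length T = n \<and>
    card (symdiff (MUS T i (j + 1)) (MUS T i j)) = card (symdiff (MUS W 1 (Suc (j + 1 - i))) (MUS W 1 (j + 1 - i))) \<and>
    int (card (MUS T i (j + 1))) - int (card (MUS T i j)) = int (card (MUS W 1 (Suc (j + 1 - i)))) - int (card (MUS W 1 (j + 1 - i)))"
proof -
  have len: "length T = n" unfolding T_def using assms by simp
  have d: "drop (i - 1) T = W @ replicate (n - Suc j) x" unfolding T_def by simp
  have e1: "MUS T i j = shf (i - 1) ` MUS W 1 (j + 1 - i)"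
    using MUS_shift[OF assms(1), of T j] MUS_pad[of "j + 1 - i" W] assms unfolding d by simp
  have e2: "MUS T i (j + 1) = shf (i - 1) ` MUS W 1 (Suc (j + 1 - i))"
    using MUS_shift[OF assms(1), of T "j + 1"] MUS_pad[of "Suc (j + 1 - i)" W] assms unfolding d
    by (simp add: Suc_diff_le)
  show ?thesis unfolding e1 e2 using len img_quant[OF inj_shf] by metis
qed

theorem theorem1:
  shows "(\<forall>(T :: 'a list) (\<Sigma> :: 'a set) i j.
            finite \<Sigma> \<and> card \<Sigma> \<ge> 2 \<and> set T \<subseteq> \<Sigma> \<and> 1 \<le> i \<and> i \<le> j \<and> j < length T \<longrightarrow>
              card (symdiff (MUS T i (j + 1)) (MUS T i j)) \<le> 4
            \<and> -1 \<le> int (card (MUS T i (j + 1))) - int (card (MUS T i j))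
            \<and> int (card (MUS T i (j + 1))) - int (card (MUS T i j)) \<le> 2)
       \<and> (\<forall>(\<Sigma> :: 'a set) (n :: nat) i j.
            finite \<Sigma> \<and> card \<Sigma> \<ge> 3 \<and> 1 \<le> i \<and> i \<le> j \<and> j < n \<and> j - i + 1 \<ge> 5 \<longrightarrow>
              (\<exists>T. length T = n \<and> set T \<subseteq> \<Sigma> \<and>
                   card (symdiff (MUS T i (j + 1)) (MUS T i j)) = 4)
            \<and> (\<exists>T. length T = n \<and> set T \<subseteq> \<Sigma> \<and>
                   int (card (MUS T i (j + 1))) - int (card (MUS T i j)) = 2)
            \<and> (\<exists>T. length T = n \<and> set T \<subseteq> \<Sigma> \<and>
                   int (card (MUS T i (j + 1))) - int (card (MUS T i j)) = -1))"
proof (rule conjI, goal_cases)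
  case 1
  show ?case
    by (intro allI impI, elim conjE, rule part1, assumption+)
next
  case 2
  show ?case
  proof (intro allI impI conjI)
  fix \<Sigma> :: "'a set" and n :: nat and i j
  assume h: "finite \<Sigma> \<and> card \<Sigma> \<ge> 3 \<and> 1 \<le> i \<and> i \<le> j \<and> j < n \<and> j - i + 1 \<ge> 5"
  have fS: "finite \<Sigma>" "3 \<le> card \<Sigma>" using h by auto
  have "\<exists>a b c. a \<in> \<Sigma> \<and> b \<in> \<Sigma> \<and> c \<in> \<Sigma> \<and> a \<noteq> b \<and> a \<noteq> c \<and> b \<noteq> c"
    by (rule three_elems[OF fS])
  then obtain a b c where abc: "a \<in> \<Sigma>" "b \<in> \<Sigma>" "c \<in> \<Sigma>" "a \<noteq> b" "a \<noteq> c" "b \<noteq> c"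
    by blast
  define m where "m = j + 1 - i"
  define k where "k = m - 3"
  have k2: "2 \<le> k" and km: "k + 3 = m" using h unfolding k_def m_def by auto
  have h1: "1 \<le> i" "i \<le> j" "j < n" using h by auto
  define W where "W = W2 a b c k"
  have Wd: "W = replicate k a @ [b, c, c, b]" unfolding W_def by (rule W2_def[OF abc(4,5,6) k2])
  have lW: "length W = Suc (j + 1 - i)" using Wd km unfolding m_def by simp
  have sW: "set W \<subseteq> \<Sigma>" using Wd abc by auto
  define T2 where "T2 = replicate (i - 1) a @ W @ replicate (n - Suc j) a"
  note r2 = reduce[OF h1 lW, of a, folded T2_def, folded m_def]
  note x2 = ex2[OF abc(4,5,6) k2, folded W_def, unfolded km]
  note f2 = fin_arith[of "MUS W 1 (Suc m)" "MUS W 1 m", OF finite_MUS finite_MUS]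
  have sT2: "set T2 \<subseteq> \<Sigma>" unfolding T2_def using sW abc by auto
  have lT2: "length T2 = n" using r2 by (rule conjunct1)
  have a2: "card (symdiff (MUS T2 i (j + 1)) (MUS T2 i j)) = card (symdiff (MUS W 1 (Suc m)) (MUS W 1 m))"
    using r2 by (rule conjunct1[OF conjunct2])
  have b2: "int (card (MUS T2 i (j + 1))) - int (card (MUS T2 i j)) = int (card (MUS W 1 (Suc m))) - int (card (MUS W 1 m))"
    using r2 by (rule conjunct2[OF conjunct2])
  have c2: "card (symdiff (MUS W 1 (Suc m)) (MUS W 1 m)) = 4"
    using f2 x2 by simp
  have d2: "int (card (MUS W 1 (Suc m))) - int (card (MUS W 1 m)) = 2"
    using f2 x2 by simp
  show "\<exists>T. length T = n \<and> set T \<subseteq> \<Sigma> \<and> card (symdiff (MUS T i (j + 1)) (MUS T i j)) = 4"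
    using lT2 sT2 a2 c2 by (intro exI[of _ T2]) simp
  show "\<exists>T. length T = n \<and> set T \<subseteq> \<Sigma> \<and> int (card (MUS T i (j + 1))) - int (card (MUS T i j)) = 2"
    using lT2 sT2 b2 d2 by (intro exI[of _ T2]) simp
  define V where "V = W1 a b k"
  have Vd: "V = [a, a] @ replicate k b @ [a, a]" unfolding V_def by (rule W1_def[OF abc(4) k2])
  have lV: "length V = Suc (j + 1 - i)" using Vd km unfolding m_def by simp
  have sV: "set V \<subseteq> \<Sigma>" using Vd abc by auto
  define T1 where "T1 = replicate (i - 1) a @ V @ replicate (n - Suc j) a"
  note r1 = reduce[OF h1 lV, of a, folded T1_def, folded m_def]
  note x1 = ex1[OF abc(4) k2, folded V_def, unfolded km]
  note f1 = fin_arith[of "MUS V 1 (Suc m)" "MUS V 1 m", OF finite_MUS finite_MUS]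
  have sT1: "set T1 \<subseteq> \<Sigma>" unfolding T1_def using sV abc by auto
  have lT1: "length T1 = n" using r1 by (rule conjunct1)
  have b1: "int (card (MUS T1 i (j + 1))) - int (card (MUS T1 i j)) = int (card (MUS V 1 (Suc m))) - int (card (MUS V 1 m))"
    using r1 by (rule conjunct2[OF conjunct2])
  have d1: "int (card (MUS V 1 (Suc m))) - int (card (MUS V 1 m)) = -1"
    using f1 x1 by simp
  show "\<exists>T. length T = n \<and> set T \<subseteq> \<Sigma> \<and> int (card (MUS T i (j + 1))) - int (card (MUS T i j)) = -1"
    using lT1 sT1 b1 d1 by (intro exI[of _ T1]) simp
  qed
qed


end
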